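(* Let $A\in\mathbb{R}^{n\times n}$, $B\in\mathbb{R}^{n\times r}$, $j_{\max}\ge1$, $0<\varepsilon<1$, and shifts $\alpha_1,\ldots,\alpha_{j_{\max}}\in\mathbb{C}$ with $\mathrm{Re}(\alpha_j)<0$, $A+\alpha_jI$ nonsingular, and $\|\mathcal{C}_j\|<1$ for $j=1,\ldots,j_{\max}$. Run the inexact LR-ADI iteration (with $M=I$) of the context, and suppose that for all $1\le k\le j_{\max}$ $$\|s_k\|\le\tfrac12\Big(\sqrt{\|w_{k-1}\|^2+\tfrac{2\varepsilon}{\sigma_k\gamma_k^2j_{\max}}}-\|w_{k-1}\|\Big),\qquad \sigma_k:=\|(A+\alpha_kI)^{-1}\|.$$ Then $\|\mathcal{R}^{\mathrm{comp}}_{j_{\max}}\|\le\|\mathcal{R}^{\mathrm{exact}}_{j_{\max}}\|+\varepsilon$.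
   Context: $\mathcal{C}_k:=(A+\alpha_kI)^{-1}(A-\overline{\alpha_k}I)$. Inexact LR-ADI iteration: $w_0:=B$, $\gamma_k:=\sqrt{-2\,\mathrm{Re}(\alpha_k)}$; $v_k$ arbitrary with $s_k:=w_{k-1}-(A+\alpha_kI)v_k$, $w_k:=w_{k-1}+\gamma_k^2v_k$. Computed residual $\mathcal{R}^{\mathrm{comp}}_k:=w_kw_k^*$. Exact LR-ADI residual (all $s_k=0$, same shifts): $\mathcal{R}^{\mathrm{exact}}_k:=w^{\mathrm{exact}}_k(w^{\mathrm{exact}}_k)^*$ with $w^{\mathrm{exact}}_k:=\mathcal{C}_k\cdots\mathcal{C}_1B$. Norms are spectral. *)

theory Defs
  imports "HOL-Analysis.Analysis"
begin

definition spec_norm :: "complex^'c^'m \<Rightarrow> real" where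
  "spec_norm M = onorm (\<lambda>x. M *v x)"

definition adj :: "complex^'c^'m \<Rightarrow> complex^'m^'c" where
  "adj M = (\<chi> i j. cnj (M $ j $ i))"

definition cmat :: "real^'c^'m \<Rightarrow> complex^'c^'m" where
  "cmat M = (\<chi> i j. complex_of_real (M $ i $ j))"

definition adi_C :: "real^'n^'n \<Rightarrow> complex \<Rightarrow> complex^'n^'n" where
  "adi_C A a = matrix_inv (cmat A + mat a) ** (cmat A - mat (cnj a))"

definition adi_gamma :: "complex \<Rightarrow> real" where
  "adi_gamma a = sqrt (- 2 * Re a)"

primrec w_exact :: "real^'n^'n \<Rightarrow> real^'r^'n \<Rightarrow> (nat \<Rightarrow> complex) \<Rightarrow> nat \<Rightarrow> complex^'r^'n" where
  "w_exact A B alpha 0 = cmat B"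
| "w_exact A B alpha (Suc k) = adi_C A (alpha (Suc k)) ** w_exact A B alpha k"

end

theory Submission
  imports Defs
begin

lemma bl: "bounded_linear (\<lambda>x. (M::complex^'c^'m) *v x)" by simp

lemma sn_nonneg: "0 \<le> spec_norm M" unfolding spec_norm_def by (rule onorm_pos_le[OF bl])

lemma sn_apply: "norm (M *v x) \<le> spec_norm M * norm x" unfolding spec_norm_def by (rule onorm[OF bl])

lemma sn_le: assumes "\<And>x. norm (M *v x) \<le> b * norm x" shows "spec_norm M \<le> b"
  unfolding spec_norm_def by (rule onorm_le[OF assms])

lemma sn_mult: "spec_norm ((M::complex^'c^'m) ** (N::complex^'d^'c)) \<le> spec_norm M * spec_norm N"
proof (rule sn_le)
  fix x
  have "norm ((M ** N) *v x) = norm (M *v (N *v x))" by (simp add: matrix_vector_mul_assoc)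
  also have "\<dots> \<le> spec_norm M * norm (N *v x)" by (rule sn_apply)
  also have "\<dots> \<le> spec_norm M * (spec_norm N * norm x)" by (rule mult_left_mono[OF sn_apply sn_nonneg])
  finally show "norm ((M ** N) *v x) \<le> spec_norm M * spec_norm N * norm x" by (simp add: mult.assoc)
qed

lemma sn_add: "spec_norm ((M::complex^'c^'m) + N) \<le> spec_norm M + spec_norm N"
proof (rule sn_le)
  fix x
  have "norm ((M + N) *v x) = norm (M *v x + N *v x)" by (simp add: matrix_vector_mult_add_rdistrib)
  also have "\<dots> \<le> norm (M *v x) + norm (N *v x)" by (rule norm_triangle_ineq)
  also have "\<dots> \<le> spec_norm M * norm x + spec_norm N * norm x" by (intro add_mono sn_apply)
  finally show "norm ((M + N) *v x) \<le> (spec_norm M + spec_norm N) * norm x" by (simp add: algebra_simps)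
qed

lemma sn_neg: "spec_norm (- (M::complex^'c^'m)) = spec_norm M"
proof -
  have "(\<lambda>x. (- M) *v x) = (\<lambda>x. - (M *v x))"
    by (auto simp: vec_eq_iff matrix_vector_mult_def sum_negf)
  then show ?thesis unfolding spec_norm_def by (simp add: onorm_neg)
qed

lemma sn_diff: "spec_norm ((M::complex^'c^'m) - N) \<le> spec_norm M + spec_norm N"
  using sn_add[of M "-N"] by (simp add: sn_neg)

lemma scaleR_mv: "(r *\<^sub>R (M::complex^'c^'m)) *v x = r *\<^sub>R (M *v x)"
  by (auto simp: vec_eq_iff matrix_vector_mult_def scaleR_sum_right)

lemma scaleR_mm: "(r *\<^sub>R (M::complex^'c^'m)) ** (N::complex^'d^'c) = r *\<^sub>R (M ** N)"
  by (auto simp: vec_eq_iff matrix_matrix_mult_def scaleR_sum_right)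

lemma mm_scaleR: "(M::complex^'c^'m) ** (r *\<^sub>R (N::complex^'d^'c)) = r *\<^sub>R (M ** N)"
  by (auto simp: vec_eq_iff matrix_matrix_mult_def scaleR_sum_right)

lemma sn_scaleR: "spec_norm (r *\<^sub>R (M::complex^'c^'m)) = \<bar>r\<bar> * spec_norm M"
  unfolding spec_norm_def scaleR_mv by (rule onorm_scaleR[OF bl])

lemma sn_zero: "spec_norm (0::complex^'c^'m) = 0"
  by (intro antisym sn_le sn_nonneg) simp

lemma sn_id: "spec_norm (mat 1 :: complex^'c^'c) \<le> 1"
  by (rule sn_le) simp

lemma adj_mm: "adj ((M::complex^'c^'m) ** (N::complex^'d^'c)) = adj N ** adj M"
  by (auto simp: vec_eq_iff matrix_matrix_mult_def adj_def mult.commute)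

lemma adj_add: "adj ((M::complex^'c^'m) + N) = adj M + adj N"
  by (auto simp: vec_eq_iff adj_def)

lemma adj_diff: "adj ((M::complex^'c^'m) - N) = adj M - adj N"
  by (auto simp: vec_eq_iff adj_def)

lemma adj_scaleR: "adj (r *\<^sub>R (M::complex^'c^'m)) = r *\<^sub>R adj M"
  by (auto simp: vec_eq_iff adj_def)

lemma adj_neg: "adj (- (M::complex^'c^'m)) = - adj M"
  by (auto simp: vec_eq_iff adj_def)


lemma mm_add_r: "((M::complex^'c^'m) + N) ** (K::complex^'d^'c) = M ** K + N ** K"
  by (auto simp: vec_eq_iff matrix_matrix_mult_def sum.distrib algebra_simps)

lemma mm_diff_l: "(K::complex^'c^'m) ** ((M::complex^'d^'c) - N) = K ** M - K ** N"
  by (auto simp: vec_eq_iff matrix_matrix_mult_def sum_subtractf algebra_simps)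

lemma mm_diff_r: "((M::complex^'c^'m) - N) ** (K::complex^'d^'c) = M ** K - N ** K"
  by (auto simp: vec_eq_iff matrix_matrix_mult_def sum_subtractf algebra_simps)

lemma mm_neg_l: "(- (M::complex^'c^'m)) ** (K::complex^'d^'c) = - (M ** K)"
  by (auto simp: vec_eq_iff matrix_matrix_mult_def sum_negf)

lemma mm_neg_r: "(K::complex^'c^'m) ** (- (M::complex^'d^'c)) = - (K ** M)"
  by (auto simp: vec_eq_iff matrix_matrix_mult_def sum_negf)

lemma sn_adj: "spec_norm (adj (M::complex^'c^'m)) \<le> spec_norm M"
proof (rule sn_le)
  fix y :: "complex^'m"
  define z where "z = adj M *v y"
  have zi: "z$i = (\<Sum>j\<in>UNIV. cnj (M$j$i) * y$j)" for i
    by (simp add: z_def matrix_vector_mult_def adj_def)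
  have nz: "(norm z)\<^sup>2 = (\<Sum>i\<in>UNIV. (cmod (z$i))\<^sup>2)"
    by (simp add: norm_vec_def L2_set_def sum_nonneg)
  have key: "(\<Sum>i\<in>UNIV. z$i * cnj (z$i)) = (\<Sum>j\<in>UNIV. y$j * cnj ((M *v z)$j))"
  proof -
    have "(\<Sum>i\<in>UNIV. z$i * cnj (z$i)) = (\<Sum>i\<in>UNIV. \<Sum>j\<in>UNIV. cnj (M$j$i) * y$j * cnj (z$i))"
      by (simp add: zi sum_distrib_right)
    also have "\<dots> = (\<Sum>j\<in>UNIV. \<Sum>i\<in>UNIV. y$j * cnj (M$j$i * z$i))"
      by (subst sum.swap) (simp add: mult_ac)
    also have "\<dots> = (\<Sum>j\<in>UNIV. y$j * cnj ((M *v z)$j))"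
      by (simp add: matrix_vector_mult_def sum_distrib_left)
    finally show ?thesis .
  qed
  have "(norm z)\<^sup>2 = Re (\<Sum>i\<in>UNIV. z$i * cnj (z$i))"
    unfolding nz Re_sum by (simp add: complex_mult_cnj cmod_power2)
  also have "\<dots> \<le> cmod (\<Sum>j\<in>UNIV. y$j * cnj ((M *v z)$j))"
    unfolding key by (rule complex_Re_le_cmod)
  also have "\<dots> \<le> (\<Sum>j\<in>UNIV. \<bar>cmod (y$j)\<bar> * \<bar>cmod ((M *v z)$j)\<bar>)"
    by (rule order_trans[OF norm_sum]) (simp add: norm_mult)
  also have "\<dots> \<le> norm y * norm (M *v z)"
    unfolding norm_vec_def by (rule L2_set_mult_ineq)
  also have "\<dots> \<le> norm y * (spec_norm M * norm z)"
    by (rule mult_left_mono[OF sn_apply norm_ge_zero])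
  finally have *: "(norm z)\<^sup>2 \<le> spec_norm M * norm y * norm z" by (simp add: mult_ac)
  show "norm (adj M *v y) \<le> spec_norm M * norm y"
  proof (cases "norm z = 0")
    case True then show ?thesis using sn_nonneg[of M] by (simp add: z_def[symmetric])
  next
    case False
    then have "norm z > 0" by simp
    with * show ?thesis unfolding z_def[symmetric] power2_eq_square
      by (metis mult_le_cancel_right_pos)
  qed
qed

lemma sn_mult_le:
  assumes "spec_norm (M::complex^'c^'m) \<le> a" "spec_norm (N::complex^'d^'c) \<le> b"
  shows "spec_norm (M ** N) \<le> a * b"
proof -
  have "0 \<le> a" using sn_nonneg[of M] assms(1) by linarith
  then show ?thesis using order_trans[OF sn_mult mult_mono[OF assms \<open>0 \<le> a\<close> sn_nonneg]] by simp
qed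

lemma scalar_bound:
  fixes a t p e J :: real
  assumes a: "0 \<le> a" and t: "0 \<le> t" and p: "0 \<le> p" "p < 2" and e: "0 < e" and J: "0 < J"
    and s: "t \<le> 1/2 * (sqrt (a\<^sup>2 + 2 * e / (p * J)) - a)"
  shows "2 * a * (p * t) + (p * t)\<^sup>2 \<le> e / J"
proof (cases "p = 0")
  case True then show ?thesis using e J by simp
next
  case False
  then have pp: "p > 0" using p by simp
  have "2 * t + a \<le> sqrt (a\<^sup>2 + 2 * e / (p * J))" using s by simp
  then have "(2 * t + a)\<^sup>2 \<le> a\<^sup>2 + 2 * e / (p * J)"
    using a t pp e J by (metis add_nonneg_nonneg mult_nonneg_nonneg zero_le_numeral power_mono
        real_sqrt_pow2 divide_nonneg_pos mult_pos_pos less_imp_le zero_less_numeral zero_le_power2)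
  then have "4 * t\<^sup>2 + 4 * a * t \<le> 2 * e / (p * J)" by (simp add: power2_eq_square algebra_simps)
  then have "p * J * (4 * t\<^sup>2 + 4 * a * t) \<le> 2 * e"
    using pp J by (simp add: field_simps)
  then have "p * (2 * t\<^sup>2 + 2 * a * t) \<le> e / J"
    using J by (simp add: field_simps)
  moreover have "(p * t)\<^sup>2 \<le> p * (2 * t\<^sup>2)"
  proof -
    have "p * (t * t) \<le> 2 * (t * t)" using p t by (intro mult_right_mono) auto
    then have "p * (p * (t * t)) \<le> p * (2 * (t * t))" using p by (intro mult_left_mono) auto
    then show ?thesis by (simp add: power2_eq_square mult_ac)
  qed
  ultimately show ?thesis by (simp add: algebra_simps)
qed

lemma step:
  fixes A :: "real^'n^'n" and a :: complex and w v x :: "complex^'r^'n" and e :: real and J :: nat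
  assumes re: "Re a < 0" and inv: "invertible (cmat A + mat a)"
    and cn: "spec_norm (adi_C A a) < 1" and e: "0 < e" and J: "J \<ge> 1"
    and s: "spec_norm (w - (cmat A + mat a) ** v)
         \<le> 1/2 * (sqrt ((spec_norm w)\<^sup>2
                + 2 * e / (spec_norm (matrix_inv (cmat A + mat a))
                             * (adi_gamma a)\<^sup>2 * real J))
              - spec_norm w)"
  shows "spec_norm ((w + (adi_gamma a)\<^sup>2 *\<^sub>R v) ** adj (w + (adi_gamma a)\<^sup>2 *\<^sub>R v)
             - (adi_C A a ** x) ** adj (adi_C A a ** x))
         \<le> spec_norm (w ** adj w - x ** adj x) + e / real J"
proof -
  define P where "P = cmat A + mat a"
  define Pi where "Pi = matrix_inv P"
  define C where "C = adi_C A a"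
  define g2 where "g2 = (adi_gamma a)\<^sup>2"
  define S where "S = w - P ** v"
  define E where "E = - (g2 *\<^sub>R (Pi ** S))"
  have g2: "g2 = - 2 * Re a" using re by (simp add: g2_def adi_gamma_def)
  have g2nn: "0 \<le> g2" using re g2 by simp
  have PiP: "Pi ** P = mat 1"
    using inv unfolding Pi_def P_def invertible_def matrix_inv_def by (rule someI2_ex) auto
  have Cform: "C = mat 1 + g2 *\<^sub>R Pi"
  proof -
    have "cmat A - mat (cnj a) = P + g2 *\<^sub>R mat 1"
      by (auto simp: P_def g2 vec_eq_iff mat_def complex_eq_iff)
    then have "C = Pi ** (P + g2 *\<^sub>R mat 1)" unfolding C_def adi_C_def Pi_def P_def by metis
    also have "\<dots> = mat 1 + g2 *\<^sub>R Pi" by (simp add: matrix_add_ldistrib mm_scaleR PiP)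
    finally show ?thesis .
  qed
  have Cn: "spec_norm C \<le> 1" using cn by (simp add: C_def)
  have p2: "g2 * spec_norm Pi < 2"
  proof -
    have "g2 *\<^sub>R Pi = C - mat 1" by (simp add: Cform)
    then have "g2 * spec_norm Pi = spec_norm (C - mat 1)" using g2nn sn_scaleR[of g2 Pi] by simp
    also have "\<dots> \<le> spec_norm C + spec_norm (mat 1 :: complex^'n^'n)" by (rule sn_diff)
    also have "\<dots> < 2" using cn sn_id[where 'c='n] by (simp add: C_def)
    finally show ?thesis .
  qed
  have wn: "w + g2 *\<^sub>R v = C ** w + E"
  proof -
    have "Pi ** S = Pi ** w - v"
      by (simp add: S_def mm_diff_l matrix_mul_assoc PiP)
    then show ?thesis
      by (simp add: E_def Cform mm_add_r mm_scaleR scaleR_mm algebra_simps flip: scaleR_add_right)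
  qed
  define t where "t = spec_norm S"
  define eta where "eta = g2 * spec_norm Pi * t"
  have En: "spec_norm E \<le> eta"
  proof -
    have "spec_norm E = g2 * spec_norm (Pi ** S)" using g2nn by (simp add: E_def sn_neg sn_scaleR)
    also have "\<dots> \<le> g2 * (spec_norm Pi * spec_norm S)" by (rule mult_left_mono[OF sn_mult g2nn])
    finally show ?thesis by (simp add: eta_def t_def mult_ac)
  qed
  have s': "t \<le> 1/2 * (sqrt ((spec_norm w)\<^sup>2 + 2 * e / ((g2 * spec_norm Pi) * real J)) - spec_norm w)"
    using s by (simp add: t_def S_def P_def Pi_def g2_def mult_ac)
  have sc: "2 * spec_norm w * eta + eta\<^sup>2 \<le> e / real J"
    unfolding eta_def
    by (rule scalar_bound[OF sn_nonneg _ _ p2 e _ s']) (use J g2nn sn_nonneg[of Pi] in \<open>auto simp: t_def sn_nonneg\<close>)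
  have wn': "(w + (adi_gamma a)\<^sup>2 *\<^sub>R v) ** adj (w + (adi_gamma a)\<^sup>2 *\<^sub>R v)
             - (adi_C A a ** x) ** adj (adi_C A a ** x)
      = C ** (w ** adj w - x ** adj x) ** adj C
        + (C ** w ** adj E + E ** adj w ** adj C + E ** adj E)"
    unfolding wn[unfolded g2_def] C_def[symmetric]
    by (simp add: adj_add adj_mm matrix_add_ldistrib mm_add_r mm_diff_l mm_diff_r matrix_mul_assoc algebra_simps)
  define D where "D = w ** adj w - x ** adj x"
  have Cadj: "spec_norm (adj C) \<le> 1" using sn_adj[of C] Cn by linarith
  have Eadj: "spec_norm (adj E) \<le> eta" using sn_adj[of E] En by linarith
  have wadj: "spec_norm (adj w) \<le> spec_norm w" by (rule sn_adj)
  have n1: "spec_norm (C ** D ** adj C) \<le> spec_norm D"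
    using sn_mult_le[OF sn_mult_le[OF Cn order_refl] Cadj, of D] by simp
  have n2: "spec_norm (C ** w ** adj E) \<le> spec_norm w * eta"
    using sn_mult_le[OF sn_mult_le[OF Cn order_refl] Eadj, of w] by simp
  have n3: "spec_norm (E ** adj w ** adj C) \<le> spec_norm w * eta"
    using sn_mult_le[OF sn_mult_le[OF En wadj] Cadj] by (simp add: mult_ac)
  have n4: "spec_norm (E ** adj E) \<le> eta\<^sup>2"
    using sn_mult_le[OF En Eadj] by (simp add: power2_eq_square)
  have "spec_norm (C ** D ** adj C + (C ** w ** adj E + E ** adj w ** adj C + E ** adj E))
      \<le> spec_norm D + (spec_norm w * eta + spec_norm w * eta + eta\<^sup>2)"
    using n1 n2 n3 n4 sn_add[of "C ** D ** adj C" "C ** w ** adj E + E ** adj w ** adj C + E ** adj E"]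
      sn_add[of "C ** w ** adj E + E ** adj w ** adj C" "E ** adj E"]
      sn_add[of "C ** w ** adj E" "E ** adj w ** adj C"] by linarith
  with sc show ?thesis unfolding wn' D_def by linarith
qed

theorem theorem3p7:
  fixes A :: "real^'n^'n" and B :: "real^'r^'n"
    and alpha :: "nat \<Rightarrow> complex" and jmax :: nat and \<epsilon> :: real
    and v w :: "nat \<Rightarrow> complex^'r^'n"
  assumes jmax: "jmax \<ge> 1"
    and eps: "0 < \<epsilon>" "\<epsilon> < 1"
    and shifts: "\<forall>j\<in>{1..jmax}. Re (alpha j) < 0 \<and> invertible (cmat A + mat (alpha j))
                     \<and> spec_norm (adi_C A (alpha j)) < 1"
    and w0: "w 0 = cmat B"
    and wk: "\<forall>k\<in>{1..jmax}. w k = w (k - 1) + (adi_gamma (alpha k))\<^sup>2 *\<^sub>R v k"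
    and sk: "\<forall>k\<in>{1..jmax}.
       spec_norm (w (k - 1) - (cmat A + mat (alpha k)) ** v k)
         \<le> 1/2 * (sqrt ((spec_norm (w (k - 1)))\<^sup>2
                + 2 * \<epsilon> / (spec_norm (matrix_inv (cmat A + mat (alpha k)))
                             * (adi_gamma (alpha k))\<^sup>2 * real jmax))
              - spec_norm (w (k - 1)))"
  shows "spec_norm (w jmax ** adj (w jmax))
           \<le> spec_norm (w_exact A B alpha jmax ** adj (w_exact A B alpha jmax)) + \<epsilon>"
proof -
  define x where "x = w_exact A B alpha"
  have ind: "k \<le> jmax \<Longrightarrow> spec_norm (w k ** adj (w k) - x k ** adj (x k)) \<le> real k * \<epsilon> / real jmax" for k
  proof (induction k)
    case 0
    then show ?case by (simp add: x_def w0 sn_zero)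
  next
    case (Suc k)
    have kk: "Suc k \<in> {1..jmax}" using Suc.prems by simp
    have "spec_norm (w (Suc k) ** adj (w (Suc k)) - x (Suc k) ** adj (x (Suc k)))
        \<le> spec_norm (w k ** adj (w k) - x k ** adj (x k)) + \<epsilon> / real jmax"
    proof -
      have sh: "Re (alpha (Suc k)) < 0" "invertible (cmat A + mat (alpha (Suc k)))"
          "spec_norm (adi_C A (alpha (Suc k))) < 1" using shifts kk by auto
      have w1: "w (Suc k) = w k + (adi_gamma (alpha (Suc k)))\<^sup>2 *\<^sub>R v (Suc k)"
        using wk kk by auto
      have s1: "spec_norm (w k - (cmat A + mat (alpha (Suc k))) ** v (Suc k))
         \<le> 1/2 * (sqrt ((spec_norm (w k))\<^sup>2
                + 2 * \<epsilon> / (spec_norm (matrix_inv (cmat A + mat (alpha (Suc k))))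
                             * (adi_gamma (alpha (Suc k)))\<^sup>2 * real jmax))
              - spec_norm (w k))" using sk kk by (metis diff_Suc_1)
      show ?thesis
        using step[OF sh eps(1) jmax s1, of "x k"] unfolding w1 by (simp add: x_def)
    qed
    also have "\<dots> \<le> real k * \<epsilon> / real jmax + \<epsilon> / real jmax"
      using Suc by simp
    also have "\<dots> = real (Suc k) * \<epsilon> / real jmax" by (simp add: add_divide_distrib algebra_simps)
    finally show ?case .
  qed
  have e1: "w jmax ** adj (w jmax) = x jmax ** adj (x jmax) + (w jmax ** adj (w jmax) - x jmax ** adj (x jmax))"
    by simp
  have "spec_norm (w jmax ** adj (w jmax)) \<le> spec_norm (x jmax ** adj (x jmax)) + real jmax * \<epsilon> / real jmax"
    using sn_add[of "x jmax ** adj (x jmax)" "w jmax ** adj (w jmax) - x jmax ** adj (x jmax)"] ind[of jmax]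
    unfolding e1[symmetric] by linarith
  then show ?thesis using jmax by (simp add: x_def)
qed

end
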